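(* Let $E,F$ be vector lattices with $F$ Dedekind complete, and let $S,T\in\mathcal{U}_+(E,F)$. Then $S\wedge T=0$ in $\mathcal{U}(E,F)$ if and only if for every $x\in E$ and every $\varepsilon>0$ there exist a partition of unity $(\rho_\alpha)_{\alpha\in\Delta}$ in $\mathfrak{P}(F)$ and a family $(x_\alpha)_{\alpha\in\Delta}\subset\mathcal{F}_x$ such that \[ \rho_\alpha Tx_\alpha\le\varepsilon\,Tx\quad\text{and}\quad\rho_\alpha S(x-x_\alpha)\le\varepsilon\,Sx\quad\text{for all }\alpha\in\Delta. \]
   Context: For a vector lattice $E$, an element $z$ is a fragment of $x\in E$ if $|z|\wedge|x-z|=0$; $\mathcal{F}_x$ denotes the set of fragments of $x$. An operator $T\colon E\to F$ between vector lattices is orthogonally additive if $T(x+y)=Tx+Ty$ whenever $|x|\wedge|y|=0$. $\mathcal{U}(E,F)$ is the set of orthogonally additive, order bounded (in general nonlinear) operators $E\to F$, ordered by $S\le T$ iff $Tx-Sx\ge0$ for all $x\in E$; $\mathcal{U}_+(E,F)$ is its positive cone. For Dedekind complete $F$, $\mathcal{U}(E,F)$ is a Dedekind complete vector lattice. $\mathfrak{P}(F)$ is the Boolean algebra of band projections of $F$ ($\rho'\wedge\rho''=\rho'\rho''$, $\rho^\perp=I_F-\rho$). A partition of unity in $\mathfrak{P}(F)$ is a family $(\rho_\alpha)$ of band projections with $\rho_\alpha\wedge\rho_\beta=0$ for $\alpha\ne\beta$ and $\sup_\alpha\rho_\alpha=I_F$. *)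

theory Defs
  imports Main "HOL.Real_Vector_Spaces"
begin

class vector_lattice = ordered_real_vector + lattice

definition vabs :: "'a::vector_lattice \<Rightarrow> 'a" where
  "vabs x = sup x (- x)"

definition disjoint_el :: "'a::vector_lattice \<Rightarrow> 'a \<Rightarrow> bool" where
  "disjoint_el x y \<longleftrightarrow> inf (vabs x) (vabs y) = 0"

definition dedekind_complete :: "'a::vector_lattice itself \<Rightarrow> bool" where
  "dedekind_complete _ \<longleftrightarrow>
     (\<forall>A :: 'a set. A \<noteq> {} \<and> (\<exists>u. \<forall>a\<in>A. a \<le> u) \<longrightarrow>
        (\<exists>s. (\<forall>a\<in>A. a \<le> s) \<and> (\<forall>u. (\<forall>a\<in>A. a \<le> u) \<longrightarrow> s \<le> u)))"

definition fragments :: "'a::vector_lattice \<Rightarrow> 'a set" where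
  "fragments x = {z. disjoint_el z (x - z)}"

definition order_bounded_set :: "'a::vector_lattice set \<Rightarrow> bool" where
  "order_bounded_set A \<longleftrightarrow> (\<exists>a b. \<forall>x\<in>A. a \<le> x \<and> x \<le> b)"

definition orth_additive :: "('e::vector_lattice \<Rightarrow> 'f::vector_lattice) \<Rightarrow> bool" where
  "orth_additive T \<longleftrightarrow> (\<forall>x y. disjoint_el x y \<longrightarrow> T (x + y) = T x + T y)"

definition order_bounded_op :: "('e::vector_lattice \<Rightarrow> 'f::vector_lattice) \<Rightarrow> bool" where
  "order_bounded_op T \<longleftrightarrow> (\<forall>A. order_bounded_set A \<longrightarrow> order_bounded_set (T ` A))"

definition U_ops :: "('e::vector_lattice \<Rightarrow> 'f::vector_lattice) set" where
  "U_ops = {T. orth_additive T \<and> order_bounded_op T}"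

definition U_le :: "('e::vector_lattice \<Rightarrow> 'f::vector_lattice) \<Rightarrow> ('e \<Rightarrow> 'f) \<Rightarrow> bool" where
  "U_le S T \<longleftrightarrow> (\<forall>x. 0 \<le> T x - S x)"

definition U_pos :: "('e::vector_lattice \<Rightarrow> 'f::vector_lattice) set" where
  "U_pos = {T \<in> U_ops. U_le (\<lambda>_. 0) T}"

definition U_inf_is :: "('e::vector_lattice \<Rightarrow> 'f::vector_lattice) \<Rightarrow> ('e \<Rightarrow> 'f) \<Rightarrow> ('e \<Rightarrow> 'f) \<Rightarrow> bool" where
  "U_inf_is S T R \<longleftrightarrow> R \<in> U_ops \<and> U_le R S \<and> U_le R T \<and>
     (\<forall>Q\<in>U_ops. U_le Q S \<and> U_le Q T \<longrightarrow> U_le Q R)"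

definition disj_compl :: "'a::vector_lattice set \<Rightarrow> 'a set" where
  "disj_compl B = {y. \<forall>x\<in>B. disjoint_el x y}"

definition ideal_vl :: "'a::vector_lattice set \<Rightarrow> bool" where
  "ideal_vl B \<longleftrightarrow> 0 \<in> B \<and> (\<forall>x\<in>B. \<forall>y\<in>B. x + y \<in> B) \<and> (\<forall>x\<in>B. \<forall>c. c *\<^sub>R x \<in> B)
     \<and> (\<forall>x y. y \<in> B \<and> vabs x \<le> vabs y \<longrightarrow> x \<in> B)"

definition band :: "'a::vector_lattice set \<Rightarrow> bool" where
  "band B \<longleftrightarrow> ideal_vl B \<and>
     (\<forall>A s. A \<subseteq> B \<and> (\<forall>a\<in>A. a \<le> s) \<and> (\<forall>u. (\<forall>a\<in>A. a \<le> u) \<longrightarrow> s \<le> u) \<longrightarrow> s \<in> B)"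

definition projection_band :: "'a::vector_lattice set \<Rightarrow> bool" where
  "projection_band B \<longleftrightarrow> band B \<and> (\<forall>x. \<exists>b\<in>B. x - b \<in> disj_compl B)"

definition band_projection :: "('a::vector_lattice \<Rightarrow> 'a) \<Rightarrow> bool" where
  "band_projection P \<longleftrightarrow> (\<exists>B. projection_band B \<and> (\<forall>x. P x \<in> B \<and> x - P x \<in> disj_compl B))"

text \<open>Order of the Boolean algebra of band projections: \<rho> \<le> \<pi> iff \<rho> \<pi> = \<rho>;
  meet is composition.\<close>
definition bp_le :: "('a::vector_lattice \<Rightarrow> 'a) \<Rightarrow> ('a \<Rightarrow> 'a) \<Rightarrow> bool" where
  "bp_le \<rho> \<pi> \<longleftrightarrow> \<rho> \<circ> \<pi> = \<rho>"

definition partition_of_unity :: "'i set \<Rightarrow> ('i \<Rightarrow> 'a::vector_lattice \<Rightarrow> 'a) \<Rightarrow> bool" where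
  "partition_of_unity \<Delta> \<rho> \<longleftrightarrow>
     (\<forall>\<alpha>\<in>\<Delta>. band_projection (\<rho> \<alpha>)) \<and>
     (\<forall>\<alpha>\<in>\<Delta>. \<forall>\<beta>\<in>\<Delta>. \<alpha> \<noteq> \<beta> \<longrightarrow> \<rho> \<alpha> \<circ> \<rho> \<beta> = (\<lambda>_. 0)) \<and>
     (\<forall>\<pi>. band_projection \<pi> \<and> (\<forall>\<alpha>\<in>\<Delta>. bp_le (\<rho> \<alpha>) \<pi>) \<longrightarrow> \<pi> = id)"

end

theory Submission
  imports Defs "HOL-Library.Lattice_Algebras"
begin


subclass (in vector_lattice) lattice_ab_group_add ..

lemma vabs_ge: "x \<le> vabs x" "- x \<le> vabs x"
  by (simp_all add: vabs_def)

lemma vabs_nonneg: "0 \<le> vabs (x::'a::vector_lattice)"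
proof -
  have "x + - x \<le> vabs x + vabs x"
    by (rule add_mono) (simp_all add: vabs_ge)
  hence "0 \<le> vabs x + vabs x" by simp
  thus ?thesis by simp
qed

lemma vabs_neg[simp]: "vabs (- x) = vabs (x::'a::vector_lattice)"
  by (simp add: vabs_def sup_commute)

lemma vabs_0[simp]: "vabs (0::'a::vector_lattice) = 0"
  by (simp add: vabs_def)

lemma vabs_le0: "vabs (x::'a::vector_lattice) \<le> 0 \<Longrightarrow> x = 0"
proof -
  assume h: "vabs x \<le> 0"
  have "vabs x = 0" using h vabs_nonneg[of x] by (rule order.antisym)
  thus "x = 0" unfolding vabs_def by (rule sup_0_imp_0)
qed

lemma vabs_eq0: "vabs (x::'a::vector_lattice) = 0 \<longleftrightarrow> x = 0"
  by (auto intro: vabs_le0)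

lemma vabs_pos: "0 \<le> (x::'a::vector_lattice) \<Longrightarrow> vabs x = x"
proof -
  assume "0 \<le> x"
  hence "- x \<le> x" using order_trans[of "-x" 0 x] by simp
  thus ?thesis unfolding vabs_def by (simp add: sup_absorb1)
qed

lemma vabs_triangle: "vabs (x + y) \<le> vabs x + vabs (y::'a::vector_lattice)"
  unfolding vabs_def
proof (rule sup_least)
  show "x + y \<le> sup x (- x) + sup y (- y)" by (rule add_mono) simp_all
  have "- x + - y \<le> sup x (- x) + sup y (- y)" by (rule add_mono) simp_all
  thus "- (x + y) \<le> sup x (- x) + sup y (- y)" by simp
qed

lemma scaleR_sup: "0 \<le> c \<Longrightarrow> c *\<^sub>R sup a b = sup (c *\<^sub>R a) (c *\<^sub>R (b::'a::vector_lattice))"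
proof (cases "c = 0")
  case False
  assume c: "0 \<le> c"
  hence cp: "0 < c" using False by simp
  show ?thesis
  proof (rule order.antisym)
    have "inverse c *\<^sub>R (c *\<^sub>R a) \<le> inverse c *\<^sub>R sup (c *\<^sub>R a) (c *\<^sub>R b)"
      by (rule scaleR_left_mono) (use cp in simp_all)
    hence "a \<le> inverse c *\<^sub>R sup (c *\<^sub>R a) (c *\<^sub>R b)" using False by simp
    moreover have "inverse c *\<^sub>R (c *\<^sub>R b) \<le> inverse c *\<^sub>R sup (c *\<^sub>R a) (c *\<^sub>R b)"
      by (rule scaleR_left_mono) (use cp in simp_all)
    hence "b \<le> inverse c *\<^sub>R sup (c *\<^sub>R a) (c *\<^sub>R b)" using False by simp
    ultimately have "sup a b \<le> inverse c *\<^sub>R sup (c *\<^sub>R a) (c *\<^sub>R b)" by simp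
    hence "c *\<^sub>R sup a b \<le> c *\<^sub>R (inverse c *\<^sub>R sup (c *\<^sub>R a) (c *\<^sub>R b))"
      using scaleR_le_cancel_left_pos[OF cp] by blast
    thus "c *\<^sub>R sup a b \<le> sup (c *\<^sub>R a) (c *\<^sub>R b)" using False by simp
    show "sup (c *\<^sub>R a) (c *\<^sub>R b) \<le> c *\<^sub>R sup a b"
      using c by (simp add: scaleR_left_mono)
  qed
qed simp

lemma scaleR_inf: "0 \<le> c \<Longrightarrow> c *\<^sub>R inf a b = inf (c *\<^sub>R a) (c *\<^sub>R (b::'a::vector_lattice))"
proof -
  assume c: "0 \<le> c"
  have "c *\<^sub>R inf a b = c *\<^sub>R (- sup (-a) (-b))"
    by (subst inf_eq_neg_sup) (rule refl)
  also have "\<dots> = - (c *\<^sub>R sup (-a) (-b))" by (rule scaleR_minus_right)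
  also have "\<dots> = - sup (c *\<^sub>R (-a)) (c *\<^sub>R (-b))" using c by (simp only: scaleR_sup)
  also have "\<dots> = - sup (- (c *\<^sub>R a)) (- (c *\<^sub>R b))" by (simp only: scaleR_minus_right)
  also have "\<dots> = inf (c *\<^sub>R a) (c *\<^sub>R b)" by (rule inf_eq_neg_sup[symmetric])
  finally show ?thesis .
qed

lemma vabs_scaleR: "vabs (c *\<^sub>R x) = \<bar>c\<bar> *\<^sub>R vabs (x::'a::vector_lattice)"
proof (cases "0 \<le> c")
  case True thus ?thesis by (simp add: vabs_def scaleR_sup)
next
  case False
  hence "vabs (c *\<^sub>R x) = vabs ((-c) *\<^sub>R x)" by simp
  also have "\<dots> = (-c) *\<^sub>R vabs x" using False scaleR_sup[of "-c" x "-x"] by (simp add: vabs_def)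
  finally show ?thesis using False by simp
qed

lemma inf_diff_distrib: "inf a b - c = inf (a - c) (b - (c::'a::vector_lattice))"
  using add_inf_distrib_right[of a b "-c"] by simp

lemma sup_diff_distrib: "sup a b - c = sup (a - c) (b - (c::'a::vector_lattice))"
  using add_sup_distrib_right[of a b "-c"] by simp

definition pos :: "'a::vector_lattice \<Rightarrow> 'a" where "pos x = sup x 0"
definition ngp :: "'a::vector_lattice \<Rightarrow> 'a" where "ngp x = sup (- x) 0"

lemma pos_nonneg: "0 \<le> pos x" and ngp_nonneg: "0 \<le> ngp x"
  by (simp_all add: pos_def ngp_def)

lemma pos_ngp: "x = pos x - ngp (x::'a::vector_lattice)"
proof -
  have "ngp x = - nprt x" by (simp add: ngp_def nprt_def neg_inf_eq_sup)
  thus ?thesis using prts[of x] by (simp add: pos_def pprt_def)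
qed

lemma pos_ngp_disj: "inf (pos x) (ngp (x::'a::vector_lattice)) = 0"
proof -
  have "inf (pos x) (ngp x) - ngp x = inf (pos x - ngp x) (ngp x - ngp x)"
    by (rule inf_diff_distrib)
  also have "\<dots> = inf x 0" using pos_ngp[of x] by simp
  also have "\<dots> = - ngp x" by (simp add: ngp_def neg_sup_eq_inf)
  finally show ?thesis by (simp add: algebra_simps)
qed

lemma disj_pos_vabs:
  assumes "0 \<le> p" "0 \<le> q" "inf p q = (0::'a::vector_lattice)"
  shows "vabs (p - q) = p + q"
proof -
  have s: "sup p q = p + q" using add_eq_inf_sup[of p q] assms by simp
  have "vabs (p - q) + (p + q) = sup (p + p) (q + q)"
    unfolding vabs_def add_sup_distrib_right by (simp add: algebra_simps)
  also have "\<dots> = 2 *\<^sub>R sup p q" using scaleR_sup[of 2 p q] by (simp add: scaleR_2)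
  also have "\<dots> = (p + q) + (p + q)" using s by (simp add: scaleR_2)
  finally show ?thesis by simp
qed

lemma vabs_pos_ngp: "vabs x = pos x + ngp (x::'a::vector_lattice)"
  using disj_pos_vabs[OF pos_nonneg ngp_nonneg pos_ngp_disj, of x] pos_ngp[of x] by simp

lemma pos_le_vabs: "pos x \<le> vabs x" and ngp_le_vabs: "ngp x \<le> vabs (x::'a::vector_lattice)"
  using vabs_pos_ngp[of x] pos_nonneg[of x] ngp_nonneg[of x] by (simp_all add: add_increasing add_increasing2)

lemma inf_add_le:
  assumes "0 \<le> u" "0 \<le> v" "0 \<le> (w::'a::vector_lattice)"
  shows "inf (u + v) w \<le> inf u w + inf v w"
proof -
  let ?t = "inf (u + v) w"
  have "?t - u \<le> v" by (simp add: algebra_simps le_infI1)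
  moreover have "?t - u \<le> w"
  proof -
    have "?t \<le> w" by simp
    also have "w \<le> w + u" using assms(1) by simp
    finally show ?thesis by (simp add: diff_le_eq)
  qed
  ultimately have "?t - u \<le> inf v w" by simp
  hence "?t \<le> inf v w + u" by (simp only: diff_le_eq)
  hence 1: "?t - inf v w \<le> u" unfolding diff_le_eq by (simp add: add.commute)
  have "?t - inf v w \<le> w"
  proof -
    have "0 \<le> inf v w" using assms(2,3) by simp
    hence "?t - inf v w \<le> ?t - 0" by (rule diff_left_mono)
    hence "?t - inf v w \<le> ?t" by (simp only: diff_0_right)
    also have "?t \<le> w" by simp
    finally show ?thesis .
  qed
  with 1 have "?t - inf v w \<le> inf u w" by (rule le_infI)
  thus ?thesis by (simp only: diff_le_eq)
qed

lemma disj_add: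
  assumes "0 \<le> u" "0 \<le> v" "0 \<le> (w::'a::vector_lattice)" "inf u w = 0" "inf v w = 0"
  shows "inf (u + v) w = 0"
proof (rule order.antisym)
  show "inf (u + v) w \<le> 0" using inf_add_le[OF assms(1-3)] assms(4,5) by simp
  show "0 \<le> inf (u + v) w" using assms(1-3) by (simp add: add_nonneg_nonneg)
qed

lemma disj_mono:
  assumes "0 \<le> u" "0 \<le> v" "u \<le> u'" "v \<le> v'" "inf u' v' = (0::'a::vector_lattice)"
  shows "inf u v = 0"
proof (rule order.antisym)
  show "inf u v \<le> 0" using inf_mono[OF assms(3,4)] assms(5) by simp
  show "0 \<le> inf u v" using assms(1,2) by simp
qed

lemma disjoint_el_sym: "disjoint_el x y \<longleftrightarrow> disjoint_el y x"
  by (simp add: disjoint_el_def inf_commute)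

lemma disjoint_vabs_add:
  assumes "disjoint_el a (b::'a::vector_lattice)"
  shows "vabs (a + b) = vabs a + vabs b"
proof -
  have d: "inf (vabs a) (vabs b) = 0" using assms by (simp add: disjoint_el_def)
  have pn: "inf (pos a) (ngp b) = 0" "inf (ngp a) (pos b) = 0"
    using disj_mono[OF pos_nonneg ngp_nonneg pos_le_vabs ngp_le_vabs d]
          disj_mono[OF ngp_nonneg pos_nonneg ngp_le_vabs pos_le_vabs d] by auto
  have "inf (pos a + pos b) (ngp a + ngp b) = 0"
  proof -
    have "inf (ngp a + ngp b) (pos a) = 0"
      using disj_add[of "ngp a" "ngp b" "pos a"] pos_ngp_disj[of a] pn
      by (simp add: inf_commute ngp_nonneg pos_nonneg)
    moreover have "inf (ngp a + ngp b) (pos b) = 0"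
      using disj_add[of "ngp a" "ngp b" "pos b"] pos_ngp_disj[of b] pn
      by (simp add: inf_commute ngp_nonneg pos_nonneg)
    ultimately show ?thesis
      using disj_add[of "pos a" "pos b" "ngp a + ngp b"]
      by (simp add: inf_commute ngp_nonneg pos_nonneg add_nonneg_nonneg)
  qed
  moreover have "a + b = (pos a + pos b) - (ngp a + ngp b)"
    using pos_ngp[of a] pos_ngp[of b] by (simp add: algebra_simps)
  moreover have "vabs ((pos a + pos b) - (ngp a + ngp b)) = (pos a + pos b) + (ngp a + ngp b)"
    by (rule disj_pos_vabs) (simp_all add: add_nonneg_nonneg pos_nonneg ngp_nonneg calculation)
  ultimately have "vabs (a + b) = (pos a + pos b) + (ngp a + ngp b)"
    by simp
  thus ?thesis by (simp add: vabs_pos_ngp algebra_simps)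
qed



lemma disj_zero[simp]: "disjoint_el (x::'a::vector_lattice) 0" "disjoint_el 0 x"
  by (simp_all add: disjoint_el_def vabs_nonneg inf_absorb2 inf_absorb1)

lemma disj_self: "disjoint_el x (x::'a::vector_lattice) \<Longrightarrow> x = 0"
  by (simp add: disjoint_el_def vabs_eq0)

lemma disj_le: "disjoint_el x z \<Longrightarrow> vabs y \<le> vabs x \<Longrightarrow> disjoint_el (y::'a::vector_lattice) z"
  unfolding disjoint_el_def by (rule disj_mono[of _ _ "vabs x" "vabs z"]) (simp_all add: vabs_nonneg)

lemma disj_add_el: "disjoint_el x z \<Longrightarrow> disjoint_el y z \<Longrightarrow> disjoint_el (x + y) (z::'a::vector_lattice)"
  unfolding disjoint_el_def
  by (rule disj_mono[OF vabs_nonneg vabs_nonneg vabs_triangle order_refl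
        disj_add[OF vabs_nonneg vabs_nonneg vabs_nonneg]])

lemma disj_scale_el: "disjoint_el x z \<Longrightarrow> disjoint_el (c *\<^sub>R x) (z::'a::vector_lattice)"
proof -
  assume d: "disjoint_el x z"
  define k where "k = max 1 \<bar>c\<bar>"
  have k: "1 \<le> k" "\<bar>c\<bar> \<le> k" by (simp_all add: k_def)
  have 1: "vabs (c *\<^sub>R x) \<le> k *\<^sub>R vabs x"
    unfolding vabs_scaleR by (rule scaleR_right_mono[OF k(2) vabs_nonneg])
  have 2: "vabs z \<le> k *\<^sub>R vabs z"
    using scaleR_right_mono[OF k(1) vabs_nonneg[of z]] by (simp only: scaleR_one)
  have 3: "inf (k *\<^sub>R vabs x) (k *\<^sub>R vabs z) = 0"
  proof -
    have "inf (k *\<^sub>R vabs x) (k *\<^sub>R vabs z) = k *\<^sub>R inf (vabs x) (vabs z)"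
      using k by (intro scaleR_inf[symmetric]) simp
    thus ?thesis using d by (simp add: disjoint_el_def)
  qed
  show ?thesis unfolding disjoint_el_def
    by (rule disj_mono[OF vabs_nonneg vabs_nonneg 1 2 3])
qed

lemma disj_neg_el: "disjoint_el x z \<Longrightarrow> disjoint_el (- x) (z::'a::vector_lattice)"
  by (simp add: disjoint_el_def)

lemma disj_diff_el: "disjoint_el x z \<Longrightarrow> disjoint_el y z \<Longrightarrow> disjoint_el (x - y) (z::'a::vector_lattice)"
  using disj_add_el[of x z "- y"] disj_neg_el[of y z] by simp

lemma disj_compl_ideal: "ideal_vl (disj_compl (A::'a::vector_lattice set))"
  unfolding ideal_vl_def disj_compl_def
proof (intro conjI ballI allI impI; clarsimp)
  fix x y z assume "\<forall>w\<in>A. disjoint_el w x" "\<forall>w\<in>A. disjoint_el w y" "z \<in> A"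
  thus "disjoint_el z (x + y)" using disj_add_el[of x z y] disjoint_el_sym by blast
next
  fix x c z assume "\<forall>w\<in>A. disjoint_el w x" "z \<in> A"
  thus "disjoint_el z (c *\<^sub>R x)" using disj_scale_el[of x z c] disjoint_el_sym by blast
next
  fix x y z assume "\<forall>w\<in>A. disjoint_el w y" "vabs x \<le> vabs y" "z \<in> A"
  thus "disjoint_el z x" using disj_le[of y z x] disjoint_el_sym by blast
qed

lemma disj_compl_iff: "y \<in> disj_compl A \<longleftrightarrow> (\<forall>x\<in>A. disjoint_el x y)"
  by (simp add: disj_compl_def)

lemma ideal_add: "ideal_vl B \<Longrightarrow> x \<in> B \<Longrightarrow> y \<in> B \<Longrightarrow> x + y \<in> B"
  and ideal_scale: "ideal_vl B \<Longrightarrow> x \<in> B \<Longrightarrow> c *\<^sub>R x \<in> B"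
  and ideal_solid: "ideal_vl B \<Longrightarrow> y \<in> B \<Longrightarrow> vabs x \<le> vabs y \<Longrightarrow> x \<in> B"
  and ideal_zero: "ideal_vl B \<Longrightarrow> 0 \<in> B"
  by (auto simp: ideal_vl_def)

lemma ideal_neg: "ideal_vl B \<Longrightarrow> x \<in> B \<Longrightarrow> - x \<in> (B::'a::vector_lattice set)"
  using ideal_scale[of B x "-1"] by simp

lemma ideal_diff: "ideal_vl B \<Longrightarrow> x \<in> B \<Longrightarrow> y \<in> B \<Longrightarrow> x - y \<in> (B::'a::vector_lattice set)"
  using ideal_add[of B x "- y"] ideal_neg[of B y] by simp

lemma disj_compl_cc: "A \<subseteq> disj_compl (disj_compl (A::'a::vector_lattice set))"
  by (auto simp: disj_compl_def disjoint_el_sym)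

lemma disj_compl_anti: "A \<subseteq> A' \<Longrightarrow> disj_compl A' \<subseteq> disj_compl (A::'a::vector_lattice set)"
  by (auto simp: disj_compl_def)

lemma disj_compl_ccc: "disj_compl (disj_compl (disj_compl A)) = disj_compl (A::'a::vector_lattice set)"
  by (meson disj_compl_anti disj_compl_cc order.antisym)

lemma disj_compl_inter: "x \<in> B \<Longrightarrow> x \<in> disj_compl B \<Longrightarrow> x = (0::'a::vector_lattice)"
  by (auto simp: disj_compl_def intro: disj_self)

definition is_lub :: "'a::order set \<Rightarrow> 'a \<Rightarrow> bool" where
  "is_lub A s \<longleftrightarrow> (\<forall>a\<in>A. a \<le> s) \<and> (\<forall>u. (\<forall>a\<in>A. a \<le> u) \<longrightarrow> s \<le> u)"

definition is_glb :: "'a::order set \<Rightarrow> 'a \<Rightarrow> bool" where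
  "is_glb A s \<longleftrightarrow> (\<forall>a\<in>A. s \<le> a) \<and> (\<forall>u. (\<forall>a\<in>A. u \<le> a) \<longrightarrow> u \<le> s)"

lemma pos_mono: "x \<le> y \<Longrightarrow> pos x \<le> pos (y::'a::vector_lattice)"
  by (simp add: pos_def le_supI1)

lemma ngp_anti: "x \<le> y \<Longrightarrow> ngp y \<le> ngp (x::'a::vector_lattice)"
  by (simp add: ngp_def le_supI1)

lemma le_pos: "x \<le> pos (x::'a::vector_lattice)"
  by (simp add: pos_def)

lemma band_disj_compl: "band (disj_compl (X::'a::vector_lattice set))"
  unfolding band_def
proof (intro conjI allI impI)
  show "ideal_vl (disj_compl X)" by (rule disj_compl_ideal)
  fix A s assume h: "A \<subseteq> disj_compl X \<and> (\<forall>a\<in>A. a \<le> s) \<and> (\<forall>u. (\<forall>a\<in>A. a \<le> u) \<longrightarrow> s \<le> u)"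
  show "s \<in> disj_compl X"
    unfolding disj_compl_iff
  proof
    fix z assume zX: "z \<in> X"
    let ?w = "vabs z"
    show "disjoint_el z s"
    proof (cases "A = {}")
      case True
      hence "s \<le> s - ?w" using h by simp
      hence "?w \<le> 0" by (simp only: le_diff_eq add_le_same_cancel1)
      hence "z = 0" by (rule vabs_le0)
      thus ?thesis by simp
    next
      case False
      then obtain a0 where a0: "a0 \<in> A" by blast
      have disjA: "inf (vabs a) ?w = 0" if "a \<in> A" for a
        using h that zX by (auto simp: disj_compl_def disjoint_el_def inf_commute)
      let ?t = "inf (pos s) ?w"
      have t0: "0 \<le> ?t" by (simp add: pos_nonneg vabs_nonneg)
      have "a \<le> pos s - ?t" if aA: "a \<in> A" for a
      proof -
        have "inf (pos a) ?t = 0"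
          by (rule disj_mono[OF pos_nonneg t0 pos_le_vabs _ disjA[OF aA]]) simp
        hence "pos a + ?t = sup (pos a) ?t" using add_eq_inf_sup[of "pos a" ?t] by simp
        also have "\<dots> \<le> pos s" using h aA by (simp add: pos_mono)
        finally have "pos a \<le> pos s - ?t" by (simp only: le_diff_eq)
        thus ?thesis using le_pos[of a] by (rule order_trans[rotated])
      qed
      hence "s \<le> pos s - ?t" using h by blast
      moreover have "0 \<le> pos s - ?t" by (simp only: diff_ge_0_iff_ge inf_le1)
      ultimately have "sup s 0 \<le> pos s - ?t" by (rule sup_least)
      hence "pos s \<le> pos s - ?t" by (simp only: pos_def[of s, symmetric])
      hence "?t \<le> 0" by (simp only: le_diff_eq add_le_same_cancel1)
      hence t: "?t = 0" using t0 by simp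
      have n: "inf (ngp s) ?w = 0"
      proof (rule disj_mono[OF ngp_nonneg vabs_nonneg _ order_refl disjA[OF a0]])
        have "a0 \<le> s" using h a0 by blast
        hence "ngp s \<le> ngp a0" by (rule ngp_anti)
        thus "ngp s \<le> vabs a0" using ngp_le_vabs[of a0] by simp
      qed
      have "inf (vabs s) ?w = 0"
        unfolding vabs_pos_ngp[of s] by (rule disj_add[OF pos_nonneg ngp_nonneg vabs_nonneg t n])
      thus ?thesis by (simp add: disjoint_el_def inf_commute)
    qed
  qed
qed



lemma dc_lub:
  assumes "dedekind_complete TYPE('a::vector_lattice)" "(A::'a set) \<noteq> {}" "\<forall>a\<in>A. a \<le> u"
  shows "\<exists>s. is_lub A s"
  using assms unfolding dedekind_complete_def is_lub_def by blast

lemma dc_glb: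
  assumes dc: "dedekind_complete TYPE('a::vector_lattice)" and ne: "(A::'a set) \<noteq> {}"
    and lb: "\<forall>a\<in>A. l \<le> a"
  shows "\<exists>s. is_glb A s"
proof -
  have "\<forall>a\<in>uminus ` A. a \<le> - l" using lb by auto
  then obtain s where s: "is_lub (uminus ` A) s" using dc_lub[OF dc, of "uminus ` A"] ne by blast
  have "is_glb A (- s)"
    unfolding is_glb_def
  proof (intro conjI ballI allI impI)
    fix a assume "a \<in> A"
    hence "- a \<le> s" using s by (auto simp: is_lub_def)
    thus "- s \<le> a" by (simp add: minus_le_iff)
  next
    fix u assume "\<forall>a\<in>A. u \<le> a"
    hence "\<forall>a\<in>uminus ` A. a \<le> - u" by auto
    hence "s \<le> - u" using s by (auto simp: is_lub_def)
    thus "u \<le> - s" by (simp add: le_minus_iff)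
  qed
  thus ?thesis by blast
qed

lemma glb_unique: "is_glb A a \<Longrightarrow> is_glb A b \<Longrightarrow> a = (b::'a::order)"
  unfolding is_glb_def by (meson order.antisym)

lemma glb_add:
  assumes "is_glb A a" "is_glb B (b::'a::vector_lattice)"
  shows "is_glb {x + y |x y. x \<in> A \<and> y \<in> B} (a + b)"
  unfolding is_glb_def
proof (intro conjI ballI allI impI)
  fix z assume "z \<in> {x + y |x y. x \<in> A \<and> y \<in> B}"
  then obtain x y where "z = x + y" "x \<in> A" "y \<in> B" by blast
  thus "a + b \<le> z" using assms by (auto simp: is_glb_def intro: add_mono)
next
  fix l assume h: "\<forall>z\<in>{x + y |x y. x \<in> A \<and> y \<in> B}. l \<le> z"
  have "l - a \<le> y" if yB: "y \<in> B" for y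
  proof -
    have "\<forall>x\<in>A. l - y \<le> x" using h yB by (force simp: diff_le_eq)
    hence "l - y \<le> a" using assms(1) by (simp add: is_glb_def)
    thus ?thesis by (simp add: diff_le_eq add.commute)
  qed
  hence "l - a \<le> b" using assms(2) by (simp add: is_glb_def)
  thus "l \<le> a + b" by (simp add: diff_le_eq add.commute)
qed

lemma archimedean_nat:
  assumes dc: "dedekind_complete TYPE('a::vector_lattice)"
    and h: "\<forall>n::nat. of_nat n *\<^sub>R v \<le> (w::'a)"
  shows "v \<le> 0"
proof -
  let ?A = "range (\<lambda>n::nat. of_nat n *\<^sub>R v)"
  obtain s where s: "is_lub ?A s" using dc_lub[OF dc, of ?A w] h by auto
  have "\<forall>a\<in>?A. a \<le> s - v"
  proof
    fix a assume "a \<in> ?A"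
    then obtain n where a: "a = of_nat n *\<^sub>R v" by blast
    have "of_nat (Suc n) *\<^sub>R v \<le> s" using s unfolding is_lub_def by blast
    hence "a + v \<le> s" by (simp add: a scaleR_left_distrib algebra_simps)
    thus "a \<le> s - v" by (simp add: le_diff_eq)
  qed
  hence "s \<le> s - v" using s by (simp add: is_lub_def)
  thus ?thesis by (simp only: le_diff_eq add_le_same_cancel1)
qed

lemma archimedean_eps:
  assumes dc: "dedekind_complete TYPE('a::vector_lattice)"
    and w: "0 \<le> (w::'a)" and h: "\<forall>e::real. e > 0 \<longrightarrow> v \<le> e *\<^sub>R w"
  shows "v \<le> 0"
proof (rule archimedean_nat[OF dc, of v w], rule allI)
  fix n :: nat
  show "of_nat n *\<^sub>R v \<le> w"
  proof (cases "n = 0")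
    case True thus ?thesis using w by simp
  next
    case False
    hence np: "(0::real) < of_nat n" by simp
    have "v \<le> inverse (of_nat n) *\<^sub>R w" using h np by simp
    hence "of_nat n *\<^sub>R v \<le> of_nat n *\<^sub>R (inverse (of_nat n) *\<^sub>R w)"
      by (rule scaleR_left_mono) simp
    thus ?thesis using np by simp
  qed
qed

locale bproj =
  fixes B :: "'a::vector_lattice set" and P :: "'a \<Rightarrow> 'a"
  assumes pb: "projection_band B"
    and inB: "\<And>x. P x \<in> B"
    and inC: "\<And>x. x - P x \<in> disj_compl B"
begin

lemma idB: "ideal_vl B" using pb by (simp add: projection_band_def band_def)
lemma idC: "ideal_vl (disj_compl B)" by (rule disj_compl_ideal)

lemma uniq: assumes "b \<in> B" "c \<in> disj_compl B" shows "P (b + c) = b"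
proof -
  have 1: "b - P (b + c) \<in> B" using idB assms(1) inB by (rule ideal_diff)
  have "b - P (b + c) = ((b + c) - P (b + c)) - c" by simp
  hence "b - P (b + c) \<in> disj_compl B" using ideal_diff[OF idC inC[of "b + c"] assms(2)] by simp
  with 1 have "b - P (b + c) = 0" by (rule disj_compl_inter)
  thus ?thesis by simp
qed

lemma fixB: "b \<in> B \<Longrightarrow> P b = b" using uniq[of b 0] ideal_zero[OF idC] by simp
lemma killC: "c \<in> disj_compl B \<Longrightarrow> P c = 0" using uniq[of 0 c] ideal_zero[OF idB] by simp

lemma padd: "P (x + y) = P x + P y"
proof -
  have "x + y = (P x + P y) + ((x - P x) + (y - P y))" by simp
  hence "P (x + y) = P ((P x + P y) + ((x - P x) + (y - P y)))" by simp
  also have "\<dots> = P x + P y"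
    by (rule uniq) (simp_all add: ideal_add[OF idB] ideal_add[OF idC] inB inC)
  finally show ?thesis .
qed

lemma pscale: "P (c *\<^sub>R x) = c *\<^sub>R P x"
proof -
  have "c *\<^sub>R x = c *\<^sub>R P x + c *\<^sub>R (x - P x)" by (simp add: scaleR_right_diff_distrib)
  hence "P (c *\<^sub>R x) = P (c *\<^sub>R P x + c *\<^sub>R (x - P x))" by simp
  also have "\<dots> = c *\<^sub>R P x"
    by (rule uniq) (simp_all add: ideal_scale[OF idB] ideal_scale[OF idC] inB inC)
  finally show ?thesis .
qed

lemma pneg: "P (- x) = - P x" using pscale[of "-1" x] by simp
lemma pdiff: "P (x - y) = P x - P y" using padd[of x "- y"] pneg[of y] by simp
lemma pzero: "P 0 = 0" using pscale[of 0 0] by simp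

lemma rng: "P x = x \<longleftrightarrow> x \<in> B" using fixB inB by metis
lemma ker: "P x = 0 \<longleftrightarrow> x \<in> disj_compl B" using killC inC by (metis diff_zero)
lemma idem: "P (P x) = P x" using fixB inB by blast

lemma disj_parts: "disjoint_el (P x) (x - P x)"
  using inB inC by (auto simp: disj_compl_def)

lemma vabs_split: "vabs x = vabs (P x) + vabs (x - P x)"
  using disjoint_vabs_add[OF disj_parts[of x]] by simp

lemma vabs_P: "vabs (P x) \<le> vabs x"
  using vabs_split[of x] vabs_nonneg[of "x - P x"] by simp

lemma vabs_Q: "vabs (x - P x) \<le> vabs x"
  using vabs_split[of x] vabs_nonneg[of "P x"] by simp

lemma nonneg_parts: assumes "0 \<le> x" shows "0 \<le> P x" "0 \<le> x - P x"
proof -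
  have "x = vabs (P x) + vabs (x - P x)" using vabs_split[of x] vabs_pos[OF assms] by simp
  hence sum: "(vabs (P x) - P x) + (vabs (x - P x) - (x - P x)) = 0" by (simp add: algebra_simps)
  have p: "0 \<le> vabs (P x) - P x" and q: "0 \<le> vabs (x - P x) - (x - P x)"
    by (simp_all add: vabs_ge)
  have "vabs (P x) - P x = 0" "vabs (x - P x) - (x - P x) = 0"
    using add_nonneg_eq_0_iff[OF p q] sum by blast+
  thus "0 \<le> P x" "0 \<le> x - P x" using vabs_nonneg by (metis eq_iff_diff_eq_0)+
qed

lemma pnonneg: "0 \<le> x \<Longrightarrow> 0 \<le> P x" using nonneg_parts by blast
lemma ple: "0 \<le> x \<Longrightarrow> P x \<le> x" using nonneg_parts(2) by simp
lemma pmono: "x \<le> y \<Longrightarrow> P x \<le> P y"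
  using pnonneg[of "y - x"] pdiff[of y x] by simp

lemma ccB: "disj_compl (disj_compl B) = B"
proof
  show "disj_compl (disj_compl B) \<subseteq> B"
  proof
    fix z assume z: "z \<in> disj_compl (disj_compl B)"
    have "P z \<in> disj_compl (disj_compl B)" using disj_compl_cc inB by blast
    hence "z - P z \<in> disj_compl (disj_compl B)"
      using ideal_diff[OF disj_compl_ideal z] by blast
    hence "z - P z = 0" using inC disj_compl_inter by blast
    thus "z \<in> B" using inB[of z] by simp
  qed
  show "B \<subseteq> disj_compl (disj_compl B)" by (rule disj_compl_cc)
qed

lemma compl: "bproj (disj_compl B) (\<lambda>x. x - P x)"
proof
  show "projection_band (disj_compl B)"
    unfolding projection_band_def
  proof (intro conjI allI)
    show "band (disj_compl B)" by (rule band_disj_compl)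
    fix x show "\<exists>b\<in>disj_compl B. x - b \<in> disj_compl (disj_compl B)"
      using inC[of x] inB[of x] disj_compl_cc by (intro bexI[of _ "x - P x"]) auto
  qed
  fix x show "x - P x \<in> disj_compl B" by (rule inC)
  show "x - (x - P x) \<in> disj_compl (disj_compl B)" using inB[of x] ccB by simp
qed

lemma bp: "band_projection P"
  unfolding band_projection_def using pb inB inC by blast

end

lemma band_projection_bproj: "band_projection \<rho> \<Longrightarrow> \<exists>B. bproj B \<rho>"
  unfolding band_projection_def bproj_def by blast

definition PB :: "'a::vector_lattice \<Rightarrow> 'a set" where
  "PB d = disj_compl (disj_compl {d})"

lemma d_in_PB: "d \<in> PB d"
  unfolding PB_def using disj_compl_cc by blast

lemma PB_compl: "disj_compl (PB d) = disj_compl {d}"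
  unfolding PB_def by (rule disj_compl_ccc)

lemma pos_decomp:
  assumes dc: "dedekind_complete TYPE('a::vector_lattice)" and x: "0 \<le> (x::'a)"
  shows "\<exists>b\<in>PB d. x - b \<in> disj_compl {d}"
proof -
  let ?u = "vabs d"
  let ?e = "\<lambda>n::nat. inf x (of_nat n *\<^sub>R ?u)"
  let ?A = "range ?e"
  obtain b where b: "is_lub ?A b" using dc_lub[OF dc, of ?A x] by auto
  have eb: "?e n \<le> b" for n using b by (auto simp: is_lub_def)
  have bx: "b \<le> x" using b by (auto simp: is_lub_def)
  have e0: "0 \<le> ?e n" for n using x by (simp add: vabs_nonneg scaleR_nonneg_nonneg)
  have ideal: "ideal_vl (PB d)" unfolding PB_def by (rule disj_compl_ideal)
  have eP: "?e n \<in> PB d" for n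
  proof (rule ideal_solid[OF ideal])
    show "of_nat n *\<^sub>R d \<in> PB d" by (rule ideal_scale[OF ideal d_in_PB])
    have "vabs (?e n) = ?e n" using e0 by (rule vabs_pos)
    also have "\<dots> \<le> of_nat n *\<^sub>R ?u" by simp
    also have "\<dots> = vabs (of_nat n *\<^sub>R d)" by (simp add: vabs_scaleR)
    finally show "vabs (?e n) \<le> vabs (of_nat n *\<^sub>R d)" .
  qed
  have bd: "band (PB d)" unfolding PB_def by (rule band_disj_compl)
  have AP: "?A \<subseteq> PB d" using eP by blast
  have bP: "b \<in> PB d"
    using bd AP b unfolding band_def is_lub_def by blast
  let ?c = "x - b"
  have c0: "0 \<le> ?c" using bx by simp
  let ?t = "inf ?c ?u"
  have t0: "0 \<le> ?t" using c0 by (simp add: vabs_nonneg)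
  have "?e n \<le> b - ?t" for n
  proof -
    have "?e n + ?t \<le> x"
    proof -
      have "?e n + ?t \<le> b + ?c" by (rule add_mono[OF eb inf_le1])
      thus ?thesis by simp
    qed
    moreover have "?e n + ?t \<le> of_nat (Suc n) *\<^sub>R ?u"
    proof -
      have "?e n + ?t \<le> of_nat n *\<^sub>R ?u + ?u" by (rule add_mono) simp_all
      thus ?thesis by (simp add: scaleR_left_distrib algebra_simps)
    qed
    ultimately have "?e n + ?t \<le> ?e (Suc n)" by simp
    also have "\<dots> \<le> b" by (rule eb)
    finally show ?thesis by (simp only: le_diff_eq)
  qed
  hence "\<forall>a\<in>?A. a \<le> b - ?t" by blast
  hence "b \<le> b - ?t" using b unfolding is_lub_def by blast
  hence "?t \<le> 0" by (simp only: le_diff_eq add_le_same_cancel1)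
  hence "?t = 0" using t0 by simp
  hence "disjoint_el d ?c" using vabs_pos[OF c0] by (simp add: disjoint_el_def inf_commute)
  hence "?c \<in> disj_compl {d}" by (simp add: disj_compl_def)
  thus ?thesis using bP by blast
qed

lemma PB_projection_band:
  assumes dc: "dedekind_complete TYPE('a::vector_lattice)"
  shows "projection_band (PB (d::'a))"
  unfolding projection_band_def
proof (intro conjI allI)
  show "band (PB d)" unfolding PB_def by (rule band_disj_compl)
  fix x :: 'a
  obtain b1 where b1: "b1 \<in> PB d" "pos x - b1 \<in> disj_compl {d}"
    using pos_decomp[OF dc pos_nonneg] by blast
  obtain b2 where b2: "b2 \<in> PB d" "ngp x - b2 \<in> disj_compl {d}"
    using pos_decomp[OF dc ngp_nonneg] by blast
  have m: "b1 - b2 \<in> PB d"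
    using b1(1) b2(1) unfolding PB_def by (rule ideal_diff[OF disj_compl_ideal])
  have eq: "x - (b1 - b2) = (pos x - b1) - (ngp x - b2)"
    using pos_ngp[of x] by (simp add: algebra_simps)
  have "(pos x - b1) - (ngp x - b2) \<in> disj_compl {d}"
    by (rule ideal_diff[OF disj_compl_ideal b1(2) b2(2)])
  hence "x - (b1 - b2) \<in> disj_compl (PB d)" unfolding PB_compl eq .
  with m show "\<exists>b\<in>PB d. x - b \<in> disj_compl (PB d)" by blast
qed

definition pp :: "'a::vector_lattice \<Rightarrow> 'a \<Rightarrow> 'a" where
  "pp d x = (SOME b. b \<in> PB d \<and> x - b \<in> disj_compl (PB d))"

lemma pp_bproj:
  assumes dc: "dedekind_complete TYPE('a::vector_lattice)"
  shows "bproj (PB (d::'a)) (pp d)"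
proof
  show pb: "projection_band (PB d)" by (rule PB_projection_band[OF dc])
  fix x
  have "\<exists>b. b \<in> PB d \<and> x - b \<in> disj_compl (PB d)"
    using pb unfolding projection_band_def by blast
  hence "pp d x \<in> PB d \<and> x - pp d x \<in> disj_compl (PB d)"
    unfolding pp_def by (rule someI_ex)
  thus "pp d x \<in> PB d" "x - pp d x \<in> disj_compl (PB d)" by auto
qed



lemma pos_subadd: "pos (a + b) \<le> pos a + pos (b::'a::vector_lattice)"
  unfolding pos_def[of "a + b"]
  by (rule sup_least) (simp_all add: add_mono le_pos add_nonneg_nonneg pos_nonneg)

lemma vabs_pos_pos: "vabs (pos a) = pos (a::'a::vector_lattice)"
  by (rule vabs_pos[OF pos_nonneg])

lemma pos_eq0: "a \<le> 0 \<Longrightarrow> pos (a::'a::vector_lattice) = 0"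
  by (simp add: pos_def sup_absorb2)

lemma pos0_le: "pos a = 0 \<Longrightarrow> a \<le> (0::'a::vector_lattice)"
  using le_pos[of a] by simp

lemma oa_zero: "orth_additive T \<Longrightarrow> T 0 = 0"
  unfolding orth_additive_def by (metis add.right_neutral add_left_cancel disj_zero(1))

lemma frag_0: "0 \<in> fragments x" and frag_self: "x \<in> fragments x"
  by (simp_all add: fragments_def)

lemma frag_compl: "y \<in> fragments x \<Longrightarrow> x - y \<in> fragments x"
  by (simp add: fragments_def disjoint_el_sym)

lemma oa_frag: "orth_additive T \<Longrightarrow> y \<in> fragments x \<Longrightarrow> T x = T y + T (x - y)"
proof -
  assume "orth_additive T" "y \<in> fragments x"
  hence "T (y + (x - y)) = T y + T (x - y)" unfolding orth_additive_def fragments_def by blast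
  thus ?thesis by simp
qed

lemma U_pos_D:
  assumes "S \<in> U_pos"
  shows "orth_additive S" "order_bounded_op S" "0 \<le> S z"
  using assms by (auto simp: U_pos_def U_ops_def U_le_def)

lemma zero_U_ops: "(\<lambda>_. 0) \<in> U_ops"
  unfolding U_ops_def orth_additive_def order_bounded_op_def order_bounded_set_def
  by (auto intro!: exI[of _ 0])

lemma bp_le_iff: "bp_le \<rho> \<pi> \<longleftrightarrow> (\<forall>z. \<rho> (\<pi> z) = \<rho> z)"
  by (auto simp: bp_le_def fun_eq_iff)

theorem rev_dir:
  fixes S T :: "'e::vector_lattice \<Rightarrow> 'f::vector_lattice"
  assumes dc: "dedekind_complete TYPE('f)"
    and S: "S \<in> U_pos" and T: "T \<in> U_pos"
    and H: "\<forall>x. \<forall>\<epsilon>::real. \<epsilon> > 0 \<longrightarrow>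
      (\<exists>(\<Delta>::'f set) (\<rho>::'f \<Rightarrow> 'f \<Rightarrow> 'f) (xs::'f \<Rightarrow> 'e).
         partition_of_unity \<Delta> \<rho> \<and> (\<forall>\<alpha>\<in>\<Delta>. xs \<alpha> \<in> fragments x) \<and>
         (\<forall>\<alpha>\<in>\<Delta>. \<rho> \<alpha> (T (xs \<alpha>)) \<le> \<epsilon> *\<^sub>R T x \<and>
                   \<rho> \<alpha> (S (x - xs \<alpha>)) \<le> \<epsilon> *\<^sub>R S x))"
  shows "U_inf_is S T (\<lambda>_. 0)"
  unfolding U_inf_is_def
proof (intro conjI ballI impI)
  show "(\<lambda>_. 0) \<in> U_ops" by (rule zero_U_ops)
  show "U_le (\<lambda>_. 0) S" using U_pos_D(3)[OF S] by (simp add: U_le_def)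
  show "U_le (\<lambda>_. 0) T" using U_pos_D(3)[OF T] by (simp add: U_le_def)
  fix Q :: "'e \<Rightarrow> 'f" assume Q: "Q \<in> U_ops" and QST: "U_le Q S \<and> U_le Q T"
  have Qoa: "orth_additive Q" using Q by (simp add: U_ops_def)
  have QS: "Q z \<le> S z" and QT: "Q z \<le> T z" for z using QST by (auto simp: U_le_def)
  show "U_le Q (\<lambda>_. 0)"
    unfolding U_le_def
  proof
    fix x
    let ?v = "Q x" and ?w = "T x + S x"
    have w0: "0 \<le> ?w" using U_pos_D(3)[OF S] U_pos_D(3)[OF T] by (simp add: add_nonneg_nonneg)
    have "\<forall>e::real. e > 0 \<longrightarrow> ?v \<le> e *\<^sub>R ?w"
    proof (intro allI impI)
      fix e :: real assume e: "e > 0"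
      obtain \<Delta> \<rho> xs where pu: "partition_of_unity \<Delta> (\<rho>::'f \<Rightarrow> 'f \<Rightarrow> 'f)"
        and fr: "\<forall>\<alpha>\<in>\<Delta>. xs \<alpha> \<in> fragments x"
        and ineq: "\<forall>\<alpha>\<in>\<Delta>. \<rho> \<alpha> (T (xs \<alpha>)) \<le> e *\<^sub>R T x \<and> \<rho> \<alpha> (S (x - xs \<alpha>)) \<le> e *\<^sub>R S x"
        using H e by blast
      let ?t = "?v - e *\<^sub>R ?w"
      let ?u = "pos ?t"
      have kill: "\<rho> \<alpha> ?u = 0" if a: "\<alpha> \<in> \<Delta>" for \<alpha>
      proof -
        obtain B where bp: "bproj B (\<rho> \<alpha>)"
          using pu a band_projection_bproj unfolding partition_of_unity_def by blast
        interpret bproj B "\<rho> \<alpha>" by (rule bp)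
        have "?v = Q (xs \<alpha>) + Q (x - xs \<alpha>)" using oa_frag[OF Qoa] fr a by blast
        also have "\<dots> \<le> T (xs \<alpha>) + S (x - xs \<alpha>)" by (rule add_mono[OF QT QS])
        finally have "\<rho> \<alpha> ?v \<le> \<rho> \<alpha> (T (xs \<alpha>)) + \<rho> \<alpha> (S (x - xs \<alpha>))"
          using pmono padd by metis
        also have "\<dots> \<le> e *\<^sub>R T x + e *\<^sub>R S x" using ineq a by (simp add: add_mono)
        also have "\<dots> = e *\<^sub>R ?w" by (simp add: scaleR_right_distrib)
        finally have "\<rho> \<alpha> ?v \<le> e *\<^sub>R ?w" .
        hence "\<rho> \<alpha> (\<rho> \<alpha> ?v) \<le> \<rho> \<alpha> (e *\<^sub>R ?w)" by (rule pmono)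
        hence rt: "\<rho> \<alpha> ?t \<le> 0" by (simp add: idem pdiff)
        have "?u = pos (\<rho> \<alpha> ?t + (?t - \<rho> \<alpha> ?t))" by simp
        also have "\<dots> \<le> pos (\<rho> \<alpha> ?t) + pos (?t - \<rho> \<alpha> ?t)" by (rule pos_subadd)
        also have "\<dots> = pos (?t - \<rho> \<alpha> ?t)" using pos_eq0[OF rt] by simp
        finally have ule: "?u \<le> pos (?t - \<rho> \<alpha> ?t)" .
        have "pos (?t - \<rho> \<alpha> ?t) \<in> disj_compl B"
          by (rule ideal_solid[OF idC inC[of "?t"]]) (simp add: vabs_pos_pos pos_le_vabs)
        hence "?u \<in> disj_compl B"
          by (rule ideal_solid[OF idC]) (simp add: vabs_pos_pos ule)
        thus ?thesis by (simp add: ker)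
      qed
      let ?\<pi> = "\<lambda>z. z - pp ?u z"
      interpret U: bproj "PB ?u" "pp ?u" by (rule pp_bproj[OF dc])
      have "band_projection ?\<pi>" using U.compl bproj.bp by blast
      moreover have "bp_le (\<rho> \<alpha>) ?\<pi>" if a: "\<alpha> \<in> \<Delta>" for \<alpha>
        unfolding bp_le_iff
      proof
        fix z
        obtain B where bp: "bproj B (\<rho> \<alpha>)"
          using pu a band_projection_bproj unfolding partition_of_unity_def by blast
        interpret bproj B "\<rho> \<alpha>" by (rule bp)
        have "?u \<in> disj_compl B" using kill[OF a] ker by blast
        hence "B \<subseteq> disj_compl {?u}" by (auto simp: disj_compl_def disjoint_el_sym)
        hence "PB ?u \<subseteq> disj_compl B" unfolding PB_def using disj_compl_anti ccB by metis
        hence "\<rho> \<alpha> (pp ?u z) = 0" using U.inB ker by blast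
        thus "\<rho> \<alpha> (z - pp ?u z) = \<rho> \<alpha> z" by (simp add: pdiff)
      qed
      ultimately have "?\<pi> = id" using pu unfolding partition_of_unity_def by blast
      hence "?u - pp ?u ?u = ?u" by (metis id_apply)
      moreover have "pp ?u ?u = ?u" using U.fixB d_in_PB by blast
      ultimately have "?u = 0" by simp
      hence "?t \<le> 0" by (rule pos0_le)
      thus "?v \<le> e *\<^sub>R ?w" by simp
    qed
    hence "?v \<le> 0" by (rule archimedean_eps[OF dc w0])
    thus "0 \<le> 0 - Q x" by simp
  qed
qed



declare neg_inf_eq_sup[simp del] neg_sup_eq_inf[simp del]

lemma frag_vabs: "y \<in> fragments x \<Longrightarrow> vabs x = vabs y + vabs (x - (y::'a::vector_lattice))"
  unfolding fragments_def using disjoint_vabs_add[of y "x - y"] by simp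

lemma frag_le: "y \<in> fragments x \<Longrightarrow> vabs y \<le> vabs (x::'a::vector_lattice)"
  and frag_le2: "y \<in> fragments x \<Longrightarrow> vabs (x - y) \<le> vabs (x::'a::vector_lattice)"
  using frag_vabs[of y x] vabs_nonneg[of y] vabs_nonneg[of "x - y"] by simp_all

lemma disj_le2: "disjoint_el x z \<Longrightarrow> vabs y \<le> vabs x \<Longrightarrow> vabs y' \<le> vabs z \<Longrightarrow> disjoint_el y (y'::'a::vector_lattice)"
  by (meson disj_le disjoint_el_sym)

lemma frag_sum:
  assumes d: "disjoint_el z1 (z2::'a::vector_lattice)" and y1: "y1 \<in> fragments z1" and y2: "y2 \<in> fragments z2"
  shows "y1 + y2 \<in> fragments (z1 + z2)"
proof -
  have a: "disjoint_el y1 (z1 - y1)" "disjoint_el y2 (z2 - y2)" using y1 y2 by (simp_all add: fragments_def)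
  have b: "disjoint_el y1 (z2 - y2)" by (rule disj_le2[OF d frag_le[OF y1] frag_le2[OF y2]])
  have c: "disjoint_el y2 (z1 - y1)"
    by (rule disj_le2[OF d[unfolded disjoint_el_sym[of z1]] frag_le[OF y2] frag_le2[OF y1]])
  have "disjoint_el y1 ((z1 - y1) + (z2 - y2))"
    using disj_add_el[of "z1 - y1" y1 "z2 - y2"] a b by (simp add: disjoint_el_sym)
  moreover have "disjoint_el y2 ((z1 - y1) + (z2 - y2))"
    using disj_add_el[of "z1 - y1" y2 "z2 - y2"] a c by (simp add: disjoint_el_sym)
  ultimately have "disjoint_el (y1 + y2) ((z1 - y1) + (z2 - y2))" by (rule disj_add_el)
  thus ?thesis by (simp add: fragments_def algebra_simps)
qed

lemma vabs_tri_diff: "vabs (x - y) \<le> vabs x + vabs (y::'a::vector_lattice)"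
  using vabs_triangle[of x "- y"] by simp

lemma ab4: "(a + b) - (c + d) = (a - c) + (b - (d::'a::ab_group_add))"
  by (simp add: algebra_simps)

definition cmpn :: "'a::vector_lattice \<Rightarrow> 'a \<Rightarrow> 'a" where
  "cmpn a u = inf (pos a) u - inf (ngp a) u"

lemma comp_vabs: "0 \<le> u \<Longrightarrow> vabs (cmpn a u) \<le> vabs (a::'a::vector_lattice)"
proof -
  assume u: "0 \<le> u"
  have "vabs (cmpn a u) \<le> vabs (inf (pos a) u) + vabs (- inf (ngp a) u)"
    unfolding cmpn_def using vabs_triangle[of "inf (pos a) u" "- inf (ngp a) u"] by simp
  also have "\<dots> = inf (pos a) u + inf (ngp a) u"
    using u by (simp only: vabs_neg) (simp add: vabs_pos pos_nonneg ngp_nonneg)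
  also have "\<dots> \<le> pos a + ngp a" by (rule add_mono) simp_all
  finally show ?thesis by (simp add: vabs_pos_ngp)
qed

lemma comp_vabs2: "0 \<le> u \<Longrightarrow> vabs (cmpn a u) \<le> 2 *\<^sub>R (u::'a::vector_lattice)"
proof -
  assume u: "0 \<le> u"
  have "vabs (cmpn a u) \<le> vabs (inf (pos a) u) + vabs (- inf (ngp a) u)"
    unfolding cmpn_def using vabs_triangle[of "inf (pos a) u" "- inf (ngp a) u"] by simp
  also have "\<dots> = inf (pos a) u + inf (ngp a) u"
    using u by (simp only: vabs_neg) (simp add: vabs_pos pos_nonneg ngp_nonneg)
  also have "\<dots> \<le> u + u" by (rule add_mono) simp_all
  finally show ?thesis by (simp add: scaleR_2)
qed

lemma riesz_disj:
  assumes "0 \<le> p" "0 \<le> u1" "0 \<le> u2" "inf u1 u2 = 0" "p \<le> u1 + (u2::'a::vector_lattice)"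
  shows "p = inf p u1 + inf p u2"
proof (rule order.antisym)
  have "p = inf (u1 + u2) p" using assms(5) by (simp add: inf_absorb2)
  also have "\<dots> \<le> inf u1 p + inf u2 p" by (rule inf_add_le[OF assms(2,3,1)])
  finally show "p \<le> inf p u1 + inf p u2" by (simp add: inf_commute)
  have "inf (inf p u1) (inf p u2) = 0"
    by (rule disj_mono[of _ _ u1 u2]) (use assms in simp_all)
  hence "inf p u1 + inf p u2 = sup (inf p u1) (inf p u2)"
    using add_eq_inf_sup[of "inf p u1" "inf p u2"] by simp
  also have "\<dots> \<le> p" by simp
  finally show "inf p u1 + inf p u2 \<le> p" .
qed

lemma comp_split:
  assumes d: "disjoint_el z1 (z2::'a::vector_lattice)" and a: "vabs a \<le> vabs (z1 + z2)"
  shows "a = cmpn a (vabs z1) + cmpn a (vabs z2)"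
proof -
  have i: "inf (vabs z1) (vabs z2) = 0" using d by (simp add: disjoint_el_def)
  have s: "vabs (z1 + z2) = vabs z1 + vabs z2" by (rule disjoint_vabs_add[OF d])
  have p: "pos a = inf (pos a) (vabs z1) + inf (pos a) (vabs z2)"
    by (rule riesz_disj[OF pos_nonneg vabs_nonneg vabs_nonneg i])
       (use pos_le_vabs[of a] a s in simp)
  have n: "ngp a = inf (ngp a) (vabs z1) + inf (ngp a) (vabs z2)"
    by (rule riesz_disj[OF ngp_nonneg vabs_nonneg vabs_nonneg i])
       (use ngp_le_vabs[of a] a s in simp)
  have "a = pos a - ngp a" by (rule pos_ngp)
  also have "\<dots> = (inf (pos a) (vabs z1) + inf (pos a) (vabs z2)) - (inf (ngp a) (vabs z1) + inf (ngp a) (vabs z2))"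
    using arg_cong2[where f="(-)", OF p n] .
  also have "\<dots> = cmpn a (vabs z1) + cmpn a (vabs z2)"
    unfolding cmpn_def by (rule ab4)
  finally show ?thesis .
qed

lemma frag_split:
  assumes d: "disjoint_el z1 (z2::'a::vector_lattice)" and y: "y \<in> fragments (z1 + z2)"
  shows "\<exists>y1 y2. y = y1 + y2 \<and> y1 \<in> fragments z1 \<and> y2 \<in> fragments z2 \<and>
           disjoint_el y1 y2 \<and> disjoint_el (z1 - y1) (z2 - y2)"
proof -
  let ?z = "z1 + z2"
  let ?c = "?z - y"
  let ?u1 = "vabs z1" and ?u2 = "vabs z2"
  define y1 where "y1 = cmpn y ?u1"
  define y2 where "y2 = cmpn y ?u2"
  define c1 where "c1 = cmpn ?c ?u1"
  define c2 where "c2 = cmpn ?c ?u2"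
  have yc: "disjoint_el y ?c" using y by (simp add: fragments_def)
  have ysplit: "y = y1 + y2" unfolding y1_def y2_def by (rule comp_split[OF d frag_le[OF y]])
  have csplit: "?c = c1 + c2" unfolding c1_def c2_def by (rule comp_split[OF d frag_le2[OF y]])
  have dz: "disjoint_el (5 *\<^sub>R z1) (5 *\<^sub>R z2)"
    using disj_scale_el[OF d, of 5] disj_scale_el[of z2 "5 *\<^sub>R z1" 5] by (simp add: disjoint_el_sym)
  have b1: "vabs (z1 - y1 - c1) \<le> vabs (5 *\<^sub>R z1)"
  proof -
    have "vabs (z1 - y1 - c1) \<le> vabs z1 + vabs y1 + vabs c1"
      using order_trans[OF vabs_tri_diff[of "z1 - y1" c1] add_right_mono[OF vabs_tri_diff[of z1 y1]]] .
    also have "\<dots> \<le> ?u1 + 2 *\<^sub>R ?u1 + 2 *\<^sub>R ?u1" unfolding y1_def c1_def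
      by (intro add_mono comp_vabs2 vabs_nonneg order_refl)
    also have "\<dots> = (1 + 2 + 2) *\<^sub>R ?u1" by (simp only: scaleR_left_distrib scaleR_one)
    also have "\<dots> = vabs (5 *\<^sub>R z1)" by (simp add: vabs_scaleR)
    finally show ?thesis .
  qed
  have b2: "vabs (y2 + c2 - z2) \<le> vabs (5 *\<^sub>R z2)"
  proof -
    have "vabs (y2 + c2 - z2) \<le> vabs y2 + vabs c2 + vabs z2"
      using order_trans[OF vabs_tri_diff[of "y2 + c2" z2] add_right_mono[OF vabs_triangle[of y2 c2]]] .
    also have "\<dots> \<le> 2 *\<^sub>R ?u2 + 2 *\<^sub>R ?u2 + ?u2" unfolding y2_def c2_def
      by (intro add_mono comp_vabs2 vabs_nonneg order_refl)
    also have "\<dots> = (2 + 2 + 1) *\<^sub>R ?u2" by (simp only: scaleR_left_distrib scaleR_one)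
    also have "\<dots> = vabs (5 *\<^sub>R z2)" by (simp add: vabs_scaleR)
    finally show ?thesis .
  qed
  have "z1 - y1 - c1 = y2 + c2 - z2" using ysplit csplit by (simp add: algebra_simps)
  moreover have "disjoint_el (z1 - y1 - c1) (y2 + c2 - z2)" by (rule disj_le2[OF dz b1 b2])
  ultimately have "z1 - y1 - c1 = 0" by (metis disj_self)
  hence e1: "z1 - y1 = c1" by simp
  have e2: "z2 - y2 = c2" using e1 ysplit csplit by (simp add: algebra_simps)
  have "disjoint_el y1 c1"
    by (rule disj_le2[OF yc]) (simp_all add: y1_def c1_def comp_vabs vabs_nonneg)
  hence f1: "y1 \<in> fragments z1" by (simp add: fragments_def e1)
  have "disjoint_el y2 c2"
    by (rule disj_le2[OF yc]) (simp_all add: y2_def c2_def comp_vabs vabs_nonneg)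
  hence f2: "y2 \<in> fragments z2" by (simp add: fragments_def e2)
  have dz2: "disjoint_el (2 *\<^sub>R z1) (2 *\<^sub>R z2)"
    using disj_scale_el[OF d, of 2] disj_scale_el[of z2 "2 *\<^sub>R z1" 2] by (simp add: disjoint_el_sym)
  have g1: "disjoint_el y1 y2"
    by (rule disj_le2[OF dz2]) (simp_all add: y1_def y2_def comp_vabs2 vabs_nonneg vabs_scaleR)
  have g2: "disjoint_el (z1 - y1) (z2 - y2)" unfolding e1 e2
    by (rule disj_le2[OF dz2]) (simp_all add: c1_def c2_def comp_vabs2 vabs_nonneg vabs_scaleR)
  show ?thesis using ysplit f1 f2 g1 g2 by blast
qed



declare neg_inf_eq_sup[simp del] neg_sup_eq_inf[simp del]

definition GS :: "('e::vector_lattice \<Rightarrow> 'f::vector_lattice) \<Rightarrow> ('e \<Rightarrow> 'f) \<Rightarrow> 'e \<Rightarrow> 'f set" where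
  "GS S T z = {T y + S (z - y) |y. y \<in> fragments z}"

definition Qop :: "('e::vector_lattice \<Rightarrow> 'f::vector_lattice) \<Rightarrow> ('e \<Rightarrow> 'f) \<Rightarrow> 'e \<Rightarrow> 'f" where
  "Qop S T z = (SOME q. is_glb (GS S T z) q)"

context
  fixes S T :: "'e::vector_lattice \<Rightarrow> 'f::vector_lattice"
  assumes dc: "dedekind_complete TYPE('f)"
    and S: "S \<in> U_pos" and T: "T \<in> U_pos"
begin

lemma GS_nonneg: "a \<in> GS S T z \<Longrightarrow> 0 \<le> a"
  unfolding GS_def using U_pos_D(3)[OF S] U_pos_D(3)[OF T] by (auto intro: add_nonneg_nonneg)

lemma Q_glb: "is_glb (GS S T z) (Qop S T z)"
proof -
  have "T 0 + S (z - 0) \<in> GS S T z" unfolding GS_def using frag_0 by blast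
  hence "GS S T z \<noteq> {}" by blast
  then obtain q where "is_glb (GS S T z) q" using dc_glb[OF dc, of "GS S T z" 0] GS_nonneg by blast
  thus ?thesis unfolding Qop_def by (rule someI)
qed

lemma Q_nonneg: "0 \<le> Qop S T z"
  using Q_glb[of z] GS_nonneg unfolding is_glb_def by blast

lemma Q_leT: "Qop S T z \<le> T z"
proof -
  have "T z + S (z - z) \<in> GS S T z" unfolding GS_def using frag_self by blast
  hence "Qop S T z \<le> T z + S 0" using Q_glb[of z] unfolding is_glb_def by simp
  thus ?thesis using oa_zero[OF U_pos_D(1)[OF S]] by simp
qed

lemma Q_leS: "Qop S T z \<le> S z"
proof -
  have "T 0 + S (z - 0) \<in> GS S T z" unfolding GS_def using frag_0 by blast
  hence "Qop S T z \<le> T 0 + S z" using Q_glb[of z] unfolding is_glb_def by simp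
  thus ?thesis using oa_zero[OF U_pos_D(1)[OF T]] by simp
qed

lemma GS_add:
  assumes d: "disjoint_el z1 z2"
  shows "GS S T (z1 + z2) = {a + b |a b. a \<in> GS S T z1 \<and> b \<in> GS S T z2}"
proof
  have Soa: "orth_additive S" and Toa: "orth_additive T" using U_pos_D(1) S T by auto
  show "GS S T (z1 + z2) \<subseteq> {a + b |a b. a \<in> GS S T z1 \<and> b \<in> GS S T z2}"
  proof
    fix g assume "g \<in> GS S T (z1 + z2)"
    then obtain y where g: "g = T y + S (z1 + z2 - y)" and y: "y \<in> fragments (z1 + z2)"
      unfolding GS_def by blast
    obtain y1 y2 where sp: "y = y1 + y2" "y1 \<in> fragments z1" "y2 \<in> fragments z2"
      "disjoint_el y1 y2" "disjoint_el (z1 - y1) (z2 - y2)"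
      using frag_split[OF d y] by blast
    have "T y = T y1 + T y2" using Toa sp unfolding orth_additive_def by blast
    moreover have "S (z1 + z2 - y) = S (z1 - y1) + S (z2 - y2)"
    proof -
      have eq: "z1 + z2 - y = (z1 - y1) + (z2 - y2)" using sp(1) by (simp add: algebra_simps)
      show ?thesis unfolding eq using Soa sp(5) unfolding orth_additive_def by blast
    qed
    ultimately have "g = (T y1 + S (z1 - y1)) + (T y2 + S (z2 - y2))"
      using g by (simp add: algebra_simps)
    moreover have "T y1 + S (z1 - y1) \<in> GS S T z1" "T y2 + S (z2 - y2) \<in> GS S T z2"
      unfolding GS_def using sp by blast+
    ultimately show "g \<in> {a + b |a b. a \<in> GS S T z1 \<and> b \<in> GS S T z2}" by blast
  qed
  show "{a + b |a b. a \<in> GS S T z1 \<and> b \<in> GS S T z2} \<subseteq> GS S T (z1 + z2)"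
  proof
    fix g assume "g \<in> {a + b |a b. a \<in> GS S T z1 \<and> b \<in> GS S T z2}"
    then obtain y1 y2 where g: "g = (T y1 + S (z1 - y1)) + (T y2 + S (z2 - y2))"
      and y1: "y1 \<in> fragments z1" and y2: "y2 \<in> fragments z2"
      unfolding GS_def by blast
    have "disjoint_el y1 y2" by (rule disj_le2[OF d frag_le[OF y1] frag_le[OF y2]])
    hence "T (y1 + y2) = T y1 + T y2" using Toa unfolding orth_additive_def by blast
    moreover have "disjoint_el (z1 - y1) (z2 - y2)" by (rule disj_le2[OF d frag_le2[OF y1] frag_le2[OF y2]])
    hence "S ((z1 - y1) + (z2 - y2)) = S (z1 - y1) + S (z2 - y2)" using Soa unfolding orth_additive_def by blast
    moreover have "(z1 - y1) + (z2 - y2) = z1 + z2 - (y1 + y2)" by (simp add: algebra_simps)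
    ultimately have "g = T (y1 + y2) + S (z1 + z2 - (y1 + y2))" using g by (simp add: algebra_simps)
    moreover have "y1 + y2 \<in> fragments (z1 + z2)" by (rule frag_sum[OF d y1 y2])
    ultimately show "g \<in> GS S T (z1 + z2)" unfolding GS_def by blast
  qed
qed

lemma Q_U_ops: "Qop S T \<in> U_ops"
  unfolding U_ops_def
proof (intro CollectI conjI)
  show "orth_additive (Qop S T)"
    unfolding orth_additive_def
  proof (intro allI impI)
    fix z1 z2 :: 'e assume d: "disjoint_el z1 z2"
    have "is_glb (GS S T (z1 + z2)) (Qop S T z1 + Qop S T z2)"
      unfolding GS_add[OF d] by (rule glb_add[OF Q_glb Q_glb])
    thus "Qop S T (z1 + z2) = Qop S T z1 + Qop S T z2" using Q_glb glb_unique by blast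
  qed
  show "order_bounded_op (Qop S T)"
    unfolding order_bounded_op_def
  proof (intro allI impI)
    fix A :: "'e set" assume "order_bounded_set A"
    hence "order_bounded_set (T ` A)" using U_pos_D(2)[OF T] unfolding order_bounded_op_def by blast
    then obtain a b where ab: "\<forall>x\<in>T ` A. a \<le> x \<and> x \<le> b" unfolding order_bounded_set_def by blast
    have "\<forall>x\<in>Qop S T ` A. 0 \<le> x \<and> x \<le> b"
      using ab Q_nonneg Q_leT order_trans by fastforce
    thus "order_bounded_set (Qop S T ` A)" unfolding order_bounded_set_def by blast
  qed
qed

lemma Q_zero:
  assumes inf0: "U_inf_is S T (\<lambda>_. 0)"
  shows "Qop S T x = 0"
proof -
  have "U_le (Qop S T) S" "U_le (Qop S T) T" using Q_leS Q_leT by (auto simp: U_le_def)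
  hence "U_le (Qop S T) (\<lambda>_. 0)" using inf0 Q_U_ops unfolding U_inf_is_def by blast
  hence "Qop S T x \<le> 0" by (simp add: U_le_def)
  thus ?thesis using Q_nonneg[of x] by simp
qed

lemma small:
  assumes inf0: "U_inf_is S T (\<lambda>_. 0)" and w: "0 \<le> w" "w \<noteq> 0"
  shows "\<exists>y\<in>fragments x. \<not> (w \<le> T y + S (x - y))"
proof (rule ccontr)
  assume "\<not> ?thesis"
  hence "\<forall>a\<in>GS S T x. w \<le> a" unfolding GS_def by auto
  hence "w \<le> Qop S T x" using Q_glb[of x] unfolding is_glb_def by blast
  hence "w \<le> 0" using Q_zero[OF inf0] by simp
  thus False using w by simp
qed

end



declare neg_inf_eq_sup[simp del] neg_sup_eq_inf[simp del]

lemma pp_kill_B: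
  assumes dc: "dedekind_complete TYPE('f::vector_lattice)"
    and d: "d \<in> disj_compl B" and v: "v \<in> (B::'f set)"
  shows "pp d v = 0"
proof -
  interpret bproj "PB d" "pp d" by (rule pp_bproj[OF dc])
  have "disjoint_el v d" using d v by (simp add: disj_compl_def)
  hence "v \<in> disj_compl {d}" by (simp add: disj_compl_def disjoint_el_sym)
  thus ?thesis using killC PB_compl by metis
qed

lemma PB_sub:
  assumes d: "d \<in> disj_compl (B::'f::vector_lattice set)"
  shows "PB d \<subseteq> disj_compl B"
proof -
  have "B \<subseteq> disj_compl {d}" using d by (auto simp: disj_compl_def disjoint_el_sym)
  hence "disj_compl (disj_compl {d}) \<subseteq> disj_compl B" by (rule disj_compl_anti)
  thus ?thesis by (simp add: PB_def)
qed

lemma core: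
  fixes S T :: "'e::vector_lattice \<Rightarrow> 'f::vector_lattice"
  assumes dc: "dedekind_complete TYPE('f)"
    and S: "S \<in> U_pos" and T: "T \<in> U_pos"
    and inf0: "U_inf_is S T (\<lambda>_. 0)"
    and bp: "bproj B \<pi>" and nid: "\<pi> \<noteq> id" and e: "(e::real) > 0"
  shows "\<exists>d. d \<noteq> 0 \<and> d \<in> disj_compl B \<and>
    (\<exists>y\<in>fragments x. pp d (T y) \<le> e *\<^sub>R T x \<and> pp d (S (x - y)) \<le> e *\<^sub>R S x)"
proof -
  interpret bproj B \<pi> by (rule bp)
  have S0: "0 \<le> S z" and T0: "0 \<le> T z" for z using U_pos_D(3) S T by blast+
  have eTx: "0 \<le> e *\<^sub>R T x" and eSx: "0 \<le> e *\<^sub>R S x"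
    using e T0 S0 by (simp_all add: scaleR_nonneg_nonneg)
  have Tz0: "T 0 = 0" and Sz0: "S 0 = 0" using oa_zero U_pos_D(1) S T by blast+
  have pp_red: "pp d v = pp d (v - \<pi> v)" if "d \<in> disj_compl B" for d v
  proof -
    interpret P: bproj "PB d" "pp d" by (rule pp_bproj[OF dc])
    have "pp d v = pp d (\<pi> v) + pp d (v - \<pi> v)" using P.padd[of "\<pi> v" "v - \<pi> v"] by simp
    thus ?thesis using pp_kill_B[OF dc that inB] by simp
  qed
  obtain z where "\<pi> z \<noteq> z" using nid by (auto simp: fun_eq_iff)
  hence e'0: "z - \<pi> z \<noteq> 0" by simp
  have e'C: "z - \<pi> z \<in> disj_compl B" by (rule inC)
  let ?a = "T x - \<pi> (T x)" and ?b = "S x - \<pi> (S x)"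
  have aC: "?a \<in> disj_compl B" and bC: "?b \<in> disj_compl B" by (rule inC)+
  have a0: "0 \<le> ?a" and b0: "0 \<le> ?b" using nonneg_parts(2) T0 S0 by blast+
  have aT: "?a \<le> T x" and bS: "?b \<le> S x" using pnonneg T0 S0 by simp_all
  show ?thesis
  proof (cases "?a = 0")
    case True
    let ?d = "z - \<pi> z"
    have "pp ?d (T x) = 0" using pp_red[OF e'C, of "T x"] True pp_bproj[OF dc] bproj.pzero by metis
    moreover have "pp ?d (S (x - x)) = 0" using Sz0 pp_bproj[OF dc] bproj.pzero by fastforce
    ultimately have "\<exists>y\<in>fragments x. pp ?d (T y) \<le> e *\<^sub>R T x \<and> pp ?d (S (x - y)) \<le> e *\<^sub>R S x"
      using eTx eSx frag_self[of x] by (intro bexI[of _ x]) simp_all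
    thus ?thesis using e'0 e'C by blast
  next
    case an0: False
    show ?thesis
    proof (cases "inf ?a ?b = 0")
      case True
      let ?d = "?a"
      have "disjoint_el ?a ?b" using True a0 b0 by (simp add: disjoint_el_def vabs_pos)
      hence "?b \<in> disj_compl (PB ?a)" unfolding PB_compl by (simp add: disj_compl_def)
      hence "pp ?a ?b = 0" using pp_bproj[OF dc] bproj.killC by metis
      hence "pp ?d (S (x - 0)) = 0" using pp_red[OF aC, of "S x"] by simp
      moreover have "pp ?d (T 0) = 0" using Tz0 pp_bproj[OF dc] bproj.pzero by fastforce
      ultimately have "\<exists>y\<in>fragments x. pp ?d (T y) \<le> e *\<^sub>R T x \<and> pp ?d (S (x - y)) \<le> e *\<^sub>R S x"
        using eTx eSx frag_0[of x] by (intro bexI[of _ 0]) simp_all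
      thus ?thesis using an0 aC by blast
    next
      case False
      let ?w = "inf ?a ?b"
      have w0: "0 \<le> ?w" using a0 b0 by simp
      have ew0: "0 \<le> e *\<^sub>R ?w" using w0 e by (simp add: scaleR_nonneg_nonneg)
      have ewn0: "e *\<^sub>R ?w \<noteq> 0" using False e by simp
      obtain y where y: "y \<in> fragments x" and ny: "\<not> (e *\<^sub>R ?w \<le> T y + S (x - y))"
        using small[OF dc S T inf0 ew0 ewn0] by blast
      let ?A = "T y + S (x - y)"
      let ?t = "e *\<^sub>R ?w - ?A"
      let ?d = "pos ?t"
      have A0: "0 \<le> ?A" using S0 T0 by (simp add: add_nonneg_nonneg)
      have dn0: "?d \<noteq> 0"
      proof
        assume "?d = 0"
        hence "?t \<le> 0" by (rule pos0_le)
        thus False using ny by simp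
      qed
      have tle: "?t \<le> e *\<^sub>R ?w" using A0 by (simp only: diff_le_eq le_add_same_cancel1)
      have dle: "?d \<le> e *\<^sub>R ?w" using pos_mono[OF tle] ew0 by (simp add: pos_def sup_absorb1)
      have wa: "?w \<le> ?a" and wb: "?w \<le> ?b" by simp_all
      have ewa: "e *\<^sub>R ?w \<le> e *\<^sub>R ?a" using wa e by (simp add: scaleR_left_mono)
      have dC: "?d \<in> disj_compl B"
      proof (rule ideal_solid[OF idC ideal_scale[OF idC aC, of e]])
        have "vabs ?d = ?d" by (rule vabs_pos_pos)
        also have "\<dots> \<le> e *\<^sub>R ?a" using dle ewa by (rule order_trans)
        also have "\<dots> = vabs (e *\<^sub>R ?a)" using e a0 by (simp add: vabs_scaleR vabs_pos)
        finally show "vabs ?d \<le> vabs (e *\<^sub>R ?a)" .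
      qed
      interpret P: bproj "PB ?d" "pp ?d" by (rule pp_bproj[OF dc])
      have "pp ?d (pos ?t) = ?d" using P.fixB d_in_PB by blast
      moreover have "pp ?d (ngp ?t) = 0"
      proof -
        have "disjoint_el ?d (ngp ?t)"
          using pos_ngp_disj[of ?t] by (simp add: disjoint_el_def vabs_pos pos_nonneg ngp_nonneg)
        hence "ngp ?t \<in> disj_compl (PB ?d)" unfolding PB_compl by (simp add: disj_compl_def)
        thus ?thesis by (rule P.killC)
      qed
      ultimately have ppt: "pp ?d ?t = ?d" using P.pdiff[of "pos ?t" "ngp ?t"] pos_ngp[of ?t] by simp
      have "pp ?d ?A = pp ?d (e *\<^sub>R ?w) - pp ?d ?t" using P.pdiff[of "e *\<^sub>R ?w" ?A] by simp
      also have "\<dots> = pp ?d (e *\<^sub>R ?w) - ?d" using ppt by simp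
      also have "\<dots> \<le> pp ?d (e *\<^sub>R ?w)" using pos_nonneg[of ?t] by simp
      also have "\<dots> \<le> e *\<^sub>R ?w" by (rule P.ple[OF ew0])
      finally have ppA: "pp ?d ?A \<le> e *\<^sub>R ?w" .
      have "pp ?d (T y) \<le> pp ?d ?A" using S0 by (intro P.pmono) simp
      also have "\<dots> \<le> e *\<^sub>R ?w" by (rule ppA)
      also have "\<dots> \<le> e *\<^sub>R T x" using e order_trans[OF wa aT] by (simp add: scaleR_left_mono)
      finally have 1: "pp ?d (T y) \<le> e *\<^sub>R T x" .
      have "pp ?d (S (x - y)) \<le> pp ?d ?A" using T0 by (intro P.pmono) simp
      also have "\<dots> \<le> e *\<^sub>R ?w" by (rule ppA)
      also have "\<dots> \<le> e *\<^sub>R S x" using e order_trans[OF wb bS] by (simp add: scaleR_left_mono)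
      finally have 2: "pp ?d (S (x - y)) \<le> e *\<^sub>R S x" .
      show ?thesis using dn0 dC y 1 2 by blast
    qed
  qed
qed



declare neg_inf_eq_sup[simp del] neg_sup_eq_inf[simp del]

theorem fwd_dir:
  fixes S T :: "'e::vector_lattice \<Rightarrow> 'f::vector_lattice"
  assumes dc: "dedekind_complete TYPE('f)"
    and S: "S \<in> U_pos" and T: "T \<in> U_pos"
    and inf0: "U_inf_is S T (\<lambda>_. 0)"
    and e: "(e::real) > 0"
  shows "\<exists>(\<Delta>::'f set) (\<rho>::'f \<Rightarrow> 'f \<Rightarrow> 'f) (xs::'f \<Rightarrow> 'e).
         partition_of_unity \<Delta> \<rho> \<and> (\<forall>\<alpha>\<in>\<Delta>. xs \<alpha> \<in> fragments x) \<and>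
         (\<forall>\<alpha>\<in>\<Delta>. \<rho> \<alpha> (T (xs \<alpha>)) \<le> e *\<^sub>R T x \<and>
                   \<rho> \<alpha> (S (x - xs \<alpha>)) \<le> e *\<^sub>R S x)"
proof -
  define good where "good \<rho> \<longleftrightarrow> band_projection \<rho> \<and> \<rho> \<noteq> (\<lambda>_. 0) \<and>
      (\<exists>y\<in>fragments x. \<rho> (T y) \<le> e *\<^sub>R T x \<and> \<rho> (S (x - y)) \<le> e *\<^sub>R S x)" for \<rho> :: "'f \<Rightarrow> 'f"
  define \<A> where "\<A> = {P. P \<subseteq> Collect good \<and>
      (\<forall>\<rho>1\<in>P. \<forall>\<rho>2\<in>P. \<rho>1 \<noteq> \<rho>2 \<longrightarrow> \<rho>1 \<circ> \<rho>2 = (\<lambda>_. 0))}"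
  have "\<exists>M\<in>\<A>. \<forall>X\<in>\<A>. M \<subseteq> X \<longrightarrow> X = M"
  proof (rule subset_Zorn')
    fix C assume C: "subset.chain \<A> C"
    show "\<Union>C \<in> \<A>"
      unfolding \<A>_def
    proof (intro CollectI conjI ballI impI)
      show "\<Union>C \<subseteq> Collect good" using C unfolding subset_chain_def \<A>_def by blast
      fix \<rho>1 \<rho>2 assume r1: "\<rho>1 \<in> \<Union>C" and r2: "\<rho>2 \<in> \<Union>C" and ne: "\<rho>1 \<noteq> \<rho>2"
      obtain X1 X2 where X: "X1 \<in> C" "X2 \<in> C" "\<rho>1 \<in> X1" "\<rho>2 \<in> X2" using r1 r2 by blast
      have "X1 \<subseteq> X2 \<or> X2 \<subseteq> X1" using C X unfolding subset_chain_def by blast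
      hence "\<exists>X\<in>C. \<rho>1 \<in> X \<and> \<rho>2 \<in> X" using X by blast
      then obtain X where "X \<in> C" "\<rho>1 \<in> X" "\<rho>2 \<in> X" by blast
      moreover have "X \<in> \<A>" using C \<open>X \<in> C\<close> unfolding subset_chain_def by blast
      ultimately show "\<rho>1 \<circ> \<rho>2 = (\<lambda>_. 0)" using ne unfolding \<A>_def by blast
    qed
  qed
  then obtain M where M: "M \<in> \<A>" and Mmax: "\<forall>X\<in>\<A>. M \<subseteq> X \<longrightarrow> X = M" by blast
  have Mgood: "\<And>\<rho>. \<rho> \<in> M \<Longrightarrow> good \<rho>" using M unfolding \<A>_def by blast
  have Mdisj: "\<And>\<rho>1 \<rho>2. \<rho>1 \<in> M \<Longrightarrow> \<rho>2 \<in> M \<Longrightarrow> \<rho>1 \<noteq> \<rho>2 \<Longrightarrow> \<rho>1 \<circ> \<rho>2 = (\<lambda>_. 0)"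
    using M unfolding \<A>_def by blast
  define eo where "eo \<rho> = (SOME z. \<rho> z \<noteq> 0)" for \<rho> :: "'f \<Rightarrow> 'f"
  define idx where "idx \<rho> = \<rho> (eo \<rho>)" for \<rho> :: "'f \<Rightarrow> 'f"
  have idx0: "idx \<rho> \<noteq> 0" if "\<rho> \<in> M" for \<rho>
  proof -
    have "\<exists>z. \<rho> z \<noteq> 0" using Mgood[OF that] unfolding good_def by (auto simp: fun_eq_iff)
    hence "\<rho> (eo \<rho>) \<noteq> 0" unfolding eo_def by (rule someI_ex)
    thus ?thesis by (simp add: idx_def)
  qed
  have idem: "\<rho> (\<rho> z) = \<rho> z" if "band_projection \<rho>" for \<rho> :: "'f \<Rightarrow> 'f" and z
    using band_projection_bproj[OF that] bproj.idem by metis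
  have inj: "inj_on idx M"
  proof (rule inj_onI)
    fix \<rho>1 \<rho>2 assume r: "\<rho>1 \<in> M" "\<rho>2 \<in> M" and eq: "idx \<rho>1 = idx \<rho>2"
    show "\<rho>1 = \<rho>2"
    proof (rule ccontr)
      assume ne: "\<rho>1 \<noteq> \<rho>2"
      have bp1: "band_projection \<rho>1" using Mgood[OF r(1)] by (simp add: good_def)
      have "\<rho>1 (idx \<rho>1) = idx \<rho>1" unfolding idx_def using idem[OF bp1] by simp
      moreover have "\<rho>1 (idx \<rho>2) = 0" using Mdisj[OF r ne] unfolding idx_def by (metis comp_apply)
      ultimately show False using eq idx0[OF r(1)] by simp
    qed
  qed
  define \<Delta> where "\<Delta> = idx ` M"
  define rho where "rho \<alpha> = inv_into M idx \<alpha>" for \<alpha>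
  have rhoM: "rho \<alpha> \<in> M" if "\<alpha> \<in> \<Delta>" for \<alpha>
    using that unfolding \<Delta>_def rho_def by (simp add: inv_into_into)
  have rho_idx: "rho (idx \<rho>) = \<rho>" if "\<rho> \<in> M" for \<rho>
    unfolding rho_def using inj that by (simp add: inv_into_f_f)
  have idx_rho: "idx (rho \<alpha>) = \<alpha>" if "\<alpha> \<in> \<Delta>" for \<alpha>
    using that unfolding \<Delta>_def rho_def by (simp add: f_inv_into_f)
  define xs where "xs \<alpha> = (SOME y. y \<in> fragments x \<and> rho \<alpha> (T y) \<le> e *\<^sub>R T x \<and>
       rho \<alpha> (S (x - y)) \<le> e *\<^sub>R S x)" for \<alpha>
  have xs: "xs \<alpha> \<in> fragments x \<and> rho \<alpha> (T (xs \<alpha>)) \<le> e *\<^sub>R T x \<and> rho \<alpha> (S (x - xs \<alpha>)) \<le> e *\<^sub>R S x"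
    if "\<alpha> \<in> \<Delta>" for \<alpha>
  proof -
    have "\<exists>y. y \<in> fragments x \<and> rho \<alpha> (T y) \<le> e *\<^sub>R T x \<and> rho \<alpha> (S (x - y)) \<le> e *\<^sub>R S x"
      using Mgood[OF rhoM[OF that]] unfolding good_def by blast
    thus ?thesis unfolding xs_def by (rule someI_ex)
  qed
  have pu: "partition_of_unity \<Delta> rho"
    unfolding partition_of_unity_def
  proof (intro conjI ballI impI allI)
    fix \<alpha> assume "\<alpha> \<in> \<Delta>"
    thus "band_projection (rho \<alpha>)" using Mgood rhoM unfolding good_def by blast
  next
    fix \<alpha> \<beta> assume a: "\<alpha> \<in> \<Delta>" "\<beta> \<in> \<Delta>" "\<alpha> \<noteq> \<beta>"
    hence "rho \<alpha> \<noteq> rho \<beta>" using idx_rho by metis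
    thus "rho \<alpha> \<circ> rho \<beta> = (\<lambda>_. 0)" using Mdisj rhoM a by blast
  next
    fix \<pi> assume h: "band_projection \<pi> \<and> (\<forall>\<alpha>\<in>\<Delta>. bp_le (rho \<alpha>) \<pi>)"
    obtain B where bpB: "bproj B \<pi>" using h band_projection_bproj by blast
    interpret bproj B \<pi> by (rule bpB)
    have le: "\<rho> (\<pi> z) = \<rho> z" if "\<rho> \<in> M" for \<rho> z
    proof -
      have "idx \<rho> \<in> \<Delta>" using that by (simp add: \<Delta>_def)
      hence "bp_le (rho (idx \<rho>)) \<pi>" using h by blast
      thus ?thesis using rho_idx[OF that] by (simp add: bp_le_iff)
    qed
    show "\<pi> = id"
    proof (rule ccontr)
      assume nid: "\<pi> \<noteq> id"
      obtain d y where d: "d \<noteq> 0" "d \<in> disj_compl B" and y: "y \<in> fragments x"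
        and yT: "pp d (T y) \<le> e *\<^sub>R T x" and yS: "pp d (S (x - y)) \<le> e *\<^sub>R S x"
        using core[OF dc S T inf0 bpB nid e, of x] by blast
      interpret P: bproj "PB d" "pp d" by (rule pp_bproj[OF dc])
      have ppd: "pp d d = d" using P.fixB d_in_PB by blast
      have gd: "good (pp d)" unfolding good_def
      proof (intro conjI)
        show "band_projection (pp d)" by (rule P.bp)
        show "pp d \<noteq> (\<lambda>_. 0)" using ppd d(1) by (metis)
        show "\<exists>y\<in>fragments x. pp d (T y) \<le> e *\<^sub>R T x \<and> pp d (S (x - y)) \<le> e *\<^sub>R S x"
          using y yT yS by blast
      qed
      have orth: "pp d \<circ> \<rho> = (\<lambda>_. 0) \<and> \<rho> \<circ> pp d = (\<lambda>_. 0)" if r: "\<rho> \<in> M" for \<rho>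
      proof -
        have bpr: "band_projection \<rho>" using Mgood[OF r] by (simp add: good_def)
        obtain Br where br: "bproj Br \<rho>" using band_projection_bproj[OF bpr] by blast
        interpret R: bproj Br \<rho> by (rule br)
        have "disj_compl B \<subseteq> disj_compl Br"
        proof
          fix c assume c: "c \<in> disj_compl B"
          have "\<pi> c = 0" using c killC by blast
          hence "\<rho> c = 0" using le[OF r, of c] R.pzero by simp
          thus "c \<in> disj_compl Br" using R.ker by blast
        qed
        hence "disj_compl (disj_compl Br) \<subseteq> disj_compl (disj_compl B)" by (rule disj_compl_anti)
        hence BrB: "Br \<subseteq> B" using R.ccB ccB by simp
        have 1: "pp d (\<rho> z) = 0" for z using pp_kill_B[OF dc d(2)] BrB R.inB by blast
        have 2: "\<rho> (pp d z) = 0" for z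
        proof -
          have "pp d z \<in> disj_compl B" using PB_sub[OF d(2)] P.inB by blast
          hence "\<pi> (pp d z) = 0" using killC by blast
          thus ?thesis using le[OF r, of "pp d z"] R.pzero by simp
        qed
        show ?thesis using 1 2 by (auto simp: fun_eq_iff)
      qed
      have "insert (pp d) M \<in> \<A>"
        unfolding \<A>_def using M gd orth unfolding \<A>_def by auto
      hence "insert (pp d) M = M" using Mmax by blast
      hence "pp d \<in> M" by blast
      hence "pp d \<circ> pp d = (\<lambda>_. 0)" using orth by blast
      hence "pp d (pp d d) = 0" by (metis comp_apply)
      thus False using ppd d(1) by simp
    qed
  qed
  show ?thesis
    using pu xs by (intro exI[of _ \<Delta>] exI[of _ rho] exI[of _ xs]) blast
qed


theorem theorem3p3:
  fixes S T :: "'e::vector_lattice \<Rightarrow> 'f::vector_lattice"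
  assumes "dedekind_complete TYPE('f)"
    and "S \<in> U_pos" and "T \<in> U_pos"
  shows "U_inf_is S T (\<lambda>_. 0) \<longleftrightarrow>
    (\<forall>x. \<forall>\<epsilon>::real. \<epsilon> > 0 \<longrightarrow>
      (\<exists>(\<Delta>::'f set) (\<rho>::'f \<Rightarrow> 'f \<Rightarrow> 'f) (xs::'f \<Rightarrow> 'e).
         partition_of_unity \<Delta> \<rho> \<and> (\<forall>\<alpha>\<in>\<Delta>. xs \<alpha> \<in> fragments x) \<and>
         (\<forall>\<alpha>\<in>\<Delta>. \<rho> \<alpha> (T (xs \<alpha>)) \<le> \<epsilon> *\<^sub>R T x \<and>
                   \<rho> \<alpha> (S (x - xs \<alpha>)) \<le> \<epsilon> *\<^sub>R S x)))"
proof
  assume "U_inf_is S T (\<lambda>_. 0)"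
  thus "\<forall>x. \<forall>\<epsilon>::real. \<epsilon> > 0 \<longrightarrow>
      (\<exists>(\<Delta>::'f set) (\<rho>::'f \<Rightarrow> 'f \<Rightarrow> 'f) (xs::'f \<Rightarrow> 'e).
         partition_of_unity \<Delta> \<rho> \<and> (\<forall>\<alpha>\<in>\<Delta>. xs \<alpha> \<in> fragments x) \<and>
         (\<forall>\<alpha>\<in>\<Delta>. \<rho> \<alpha> (T (xs \<alpha>)) \<le> \<epsilon> *\<^sub>R T x \<and>
                   \<rho> \<alpha> (S (x - xs \<alpha>)) \<le> \<epsilon> *\<^sub>R S x))"
    using fwd_dir[OF assms] by blast
next
  assume "\<forall>x. \<forall>\<epsilon>::real. \<epsilon> > 0 \<longrightarrow>
      (\<exists>(\<Delta>::'f set) (\<rho>::'f \<Rightarrow> 'f \<Rightarrow> 'f) (xs::'f \<Rightarrow> 'e).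
         partition_of_unity \<Delta> \<rho> \<and> (\<forall>\<alpha>\<in>\<Delta>. xs \<alpha> \<in> fragments x) \<and>
         (\<forall>\<alpha>\<in>\<Delta>. \<rho> \<alpha> (T (xs \<alpha>)) \<le> \<epsilon> *\<^sub>R T x \<and>
                   \<rho> \<alpha> (S (x - xs \<alpha>)) \<le> \<epsilon> *\<^sub>R S x))"
  thus "U_inf_is S T (\<lambda>_. 0)" by (rule rev_dir[OF assms])
qed

end
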